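(* Let $(\Omega_X,\mathcal{F}_X)$ and $(\Omega_y,\mathcal{F}_y)$ be measurable spaces and $\pi$ a probability measure on $(\Omega_X\times\Omega_y,\mathcal{F}_X\otimes\mathcal{F}_y)$. Let $s:\Omega_X\times\Omega_y\to\mathbb{R}$ be a measurable score function, $N\ge 1$, $\alpha\in[0,1]$, and let $(X_1,y_1),\dots,(X_N,y_N),(X,y)$ be i.i.d. with law $\pi$. Let $\hat q$ be the $\lceil(1-\alpha)(N+1)\rceil$-th smallest value among $s(X_1,y_1),\dots,s(X_N,y_N)$ (with $\hat q=+\infty$ if $\lceil(1-\alpha)(N+1)\rceil>N$), and define the conformal set $S^{(\alpha)}(x)=\{y'\in\Omega_y: s(x,y')\le \hat q\}$. If $X$ and $s(X,y)$ are independent random variables, then $\alpha$-input-space strong conditional coverage holds: for every $\omega_X\in\mathcal{F}_X$ with $\mathbb{P}(X\in\omega_X)>0$, $$\mathbb{P}\big(y\in S^{(\alpha)}(X)\,\big|\,X\in\omega_X\big)\ge 1-\alpha,$$ where the probability is taken jointly over the calibration data $(X_i,y_i)_{i\le N}$ and the test point $(X,y)$.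
   Context: Split-conformal setting: the predictive model (if any) entering $s$ is fixed and independent of the calibration and test data. The calibration points $(X_i,y_i)_{i=1}^N$ and the test point $(X,y)$ are i.i.d. from $\pi$. Probabilities are marginalized over the calibration data. *)

theory Defs
  imports "HOL-Probability.Probability"
begin

text \<open>Split-conformal threshold: the k-th smallest calibration score, with
  k = ceiling((1-alpha)(N+1)), N = number of calibration scores;
  +infinity if k > N.  (k = 0 only when alpha = 1; then we use -infinity.)\<close>
definition conformal_qhat :: "real \<Rightarrow> real list \<Rightarrow> ereal" where
  "conformal_qhat \<alpha> scores =
     (let N = length scores; k = nat \<lceil>(1 - \<alpha>) * real (N + 1)\<rceil> in
      if k > N then \<infinity>
      else if k = 0 then -\<infinity>
      else ereal (sort scores ! (k - 1)))"

definition conformal_set ::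
    "'b measure \<Rightarrow> ('a \<times> 'b \<Rightarrow> real) \<Rightarrow> ereal \<Rightarrow> 'a \<Rightarrow> 'b set" where
  "conformal_set MY s q x = {y' \<in> space MY. ereal (s (x, y')) \<le> q}"

end

theory Submission
  imports Defs
begin

lemma sum_ind_card:
  assumes "finite A"
  shows "(\<Sum>i\<in>A. if P i then 1 else 0 :: real) = real (card {i\<in>A. P i})"
  using assms by (simp add: sum.inter_filter[symmetric])

lemma count_ge:
  fixes v :: "'i \<Rightarrow> real"
  assumes "finite I" "k \<le> card I"
  shows "k \<le> card {j\<in>I. card {i\<in>I. v i < v j} < k}"
  using assms
proof (induction "card I" arbitrary: I k)
  case 0
  then show ?case by simp
next
  case (Suc n)
  then have ne: "I \<noteq> {}" by auto
  have "Max (v ` I) \<in> v ` I" using Max_in[of "v ` I"] Suc.prems ne by auto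
  then obtain m where m: "m \<in> I" "v m = Max (v ` I)" by auto
  have mx: "\<And>i. i \<in> I \<Longrightarrow> v i \<le> v m" using m Suc.prems by simp
  show ?case
  proof (cases "k \<le> n")
    case True
    define I' where "I' = I - {m}"
    have cI': "card I' = n" "finite I'" using Suc.hyps Suc.prems m unfolding I'_def by auto
    have IH: "k \<le> card {j\<in>I'. card {i\<in>I'. v i < v j} < k}"
      using Suc.hyps(1)[of I' k] cI' True by simp
    have eq: "\<And>j. j \<in> I' \<Longrightarrow> {i\<in>I. v i < v j} = {i\<in>I'. v i < v j}"
      using mx unfolding I'_def by (force simp: not_less)
    have "{j\<in>I'. card {i\<in>I'. v i < v j} < k} \<subseteq> {j\<in>I. card {i\<in>I. v i < v j} < k}"
      using eq unfolding I'_def by auto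
    then have "card {j\<in>I'. card {i\<in>I'. v i < v j} < k} \<le> card {j\<in>I. card {i\<in>I. v i < v j} < k}"
      by (intro card_mono) (auto simp: Suc.prems)
    then show ?thesis using IH by linarith
  next
    case False
    then have k: "k = card I" using Suc by simp
    have "\<And>j. j \<in> I \<Longrightarrow> card {i\<in>I. v i < v j} < k"
    proof -
      fix j assume j: "j \<in> I"
      have "{i\<in>I. v i < v j} \<subseteq> I - {j}" by auto
      then have "card {i\<in>I. v i < v j} \<le> card (I - {j})" by (intro card_mono) (auto simp: Suc.prems)
      also have "\<dots> < card I" using j Suc.prems by (metis card_Diff1_less)
      finally show "card {i\<in>I. v i < v j} < k" using k by simp
    qed
    then have "{j\<in>I. card {i\<in>I. v i < v j} < k} = I" by auto
    then show ?thesis using k by simp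
  qed
qed

lemma sort_thresh:
  fixes xs :: "real list"
  assumes k: "1 \<le> k" "k \<le> length xs"
  shows "x \<le> sort xs ! (k-1) \<longleftrightarrow> card {i. i<length xs \<and> xs!i < x} < k"
proof -
  define ys where "ys = sort xs"
  have sy: "sorted ys" "length ys = length xs" unfolding ys_def by auto
  have cnt: "card {i. i<length xs \<and> xs!i < x} = length (filter (\<lambda>y. y < x) ys)"
  proof -
    have "filter (\<lambda>y. y < x) (sort xs) = sort (filter (\<lambda>y. y < x) xs)" by (rule filter_sort)
    then show ?thesis unfolding ys_def by (simp add: length_filter_conv_card)
  qed
  have split: "length (filter p ys) = length (filter p (take m ys)) + length (filter p (drop m ys))" for p m
    by (metis append_take_drop_id filter_append length_append)
  show ?thesis
  proof
    assume x: "x \<le> sort xs ! (k-1)"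
    have "filter (\<lambda>y. y < x) (drop (k-1) ys) = []"
    proof (rule filter_False, intro ballI)
      fix y assume "y \<in> set (drop (k-1) ys)"
      then obtain p where p: "p < length (drop (k-1) ys)" "y = drop (k-1) ys ! p"
        by (auto simp: in_set_conv_nth)
      then have "y = ys ! (k - 1 + p)" using k by simp
      moreover have "ys ! (k-1) \<le> ys ! (k - 1 + p)"
        using p sy by (intro sorted_nth_mono) auto
      ultimately show "\<not> y < x" using x unfolding ys_def by simp
    qed
    moreover have "length (filter (\<lambda>y. y < x) (take (k-1) ys)) \<le> k - 1"
      by (metis length_filter_le length_take min.bounded_iff nle_le)
    ultimately show "card {i. i<length xs \<and> xs!i < x} < k"
      using cnt split[of "\<lambda>y. y < x" "k-1"] k by simp
  next
    assume c: "card {i. i<length xs \<and> xs!i < x} < k"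
    show "x \<le> sort xs ! (k-1)"
    proof (rule ccontr)
      assume "\<not> x \<le> sort xs ! (k-1)"
      then have q: "ys ! (k-1) < x" unfolding ys_def by simp
      have "filter (\<lambda>y. y < x) (take k ys) = take k ys"
      proof (rule filter_True, intro ballI)
        fix y assume "y \<in> set (take k ys)"
        then obtain p where p: "p < k" "y = ys ! p" using k sy
          by (auto simp: in_set_conv_nth)
        have "ys ! p \<le> ys ! (k-1)" using p sy k by (intro sorted_nth_mono) auto
        then show "y < x" using p q by simp
      qed
      then have "length (filter (\<lambda>y. y < x) (take k ys)) = k" using k sy by simp
      then show False using cnt split[of "\<lambda>y. y < x" k] c by simp
    qed
  qed
qed

theorem proposition1:
  fixes P :: "'w measure" and MX :: "'a measure" and MY :: "'b measure"
    and \<pi> :: "('a \<times> 'b) measure" and s :: "'a \<times> 'b \<Rightarrow> real"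
    and N :: nat and \<alpha> :: real and Z :: "nat \<Rightarrow> 'w \<Rightarrow> 'a \<times> 'b"
  assumes P: "prob_space P"
    and pi: "prob_space \<pi>" "sets \<pi> = sets (MX \<Otimes>\<^sub>M MY)"
    and s_meas: "s \<in> borel_measurable (MX \<Otimes>\<^sub>M MY)"
    and N: "N \<ge> 1"
    and alpha: "0 \<le> \<alpha>" "\<alpha> \<le> 1"
    and iid_indep: "prob_space.indep_vars P (\<lambda>_. MX \<Otimes>\<^sub>M MY) Z {..N}"
    and iid_law: "\<And>i. i \<le> N \<Longrightarrow> distr P (MX \<Otimes>\<^sub>M MY) (Z i) = \<pi>"
    and indep_X_score: "prob_space.indep_set P
         {(\<lambda>w. fst (Z N w)) -` A \<inter> space P | A. A \<in> sets MX}
         {(\<lambda>w. s (Z N w)) -` B \<inter> space P | B. B \<in> sets (borel :: real measure)}"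
    and omega: "\<omega>X \<in> sets MX"
    and pos: "measure P {w \<in> space P. fst (Z N w) \<in> \<omega>X} > 0"
  shows "measure P {w \<in> space P.
            snd (Z N w) \<in> conformal_set MY s (conformal_qhat \<alpha> (map (\<lambda>i. s (Z i w)) [0..<N]))
                                        (fst (Z N w))
            \<and> fst (Z N w) \<in> \<omega>X}
         / measure P {w \<in> space P. fst (Z N w) \<in> \<omega>X} \<ge> 1 - \<alpha>"
proof -
  interpret p: prob_space P by (rule P)
  let ?M = "MX \<Otimes>\<^sub>M MY"
  have Zrv: "Z i \<in> measurable P ?M" if "i \<le> N" for i
    using iid_indep that unfolding p.indep_vars_def by auto
  define k where "k = nat \<lceil>(1 - \<alpha>) * real (N + 1)\<rceil>"
  define T where "T = {w \<in> space P.
            snd (Z N w) \<in> conformal_set MY s (conformal_qhat \<alpha> (map (\<lambda>i. s (Z i w)) [0..<N]))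
                                        (fst (Z N w))
            \<and> fst (Z N w) \<in> \<omega>X}"
  define A\<omega> where "A\<omega> = {w \<in> space P. fst (Z N w) \<in> \<omega>X}"
  have ZN_sp: "Z N w \<in> space MX \<times> space MY" if "w \<in> space P" for w
    using measurable_space[OF Zrv[of N] that] by (simp add: space_pair_measure)
  have qhat: "conformal_qhat \<alpha> (map (\<lambda>i. s (Z i w)) [0..<N]) =
      (if k > N then \<infinity> else if k = 0 then -\<infinity> else ereal (sort (map (\<lambda>i. s (Z i w)) [0..<N]) ! (k - 1)))" for w
    unfolding conformal_qhat_def k_def Let_def by simp
  have posA: "measure P A\<omega> > 0" using pos unfolding A\<omega>_def .
  consider "k > N" | "k = 0" | "1 \<le> k" "k \<le> N" by linarith
  then show ?thesis
  proof cases
    case 1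
    have "T = A\<omega>" unfolding T_def A\<omega>_def conformal_set_def qhat using 1 ZN_sp
      by (auto simp: mem_Times_iff)
    then show ?thesis using posA alpha unfolding T_def A\<omega>_def by simp
  next
    case 2
    then have "(1 - \<alpha>) * real (N + 1) \<le> 0" unfolding k_def by linarith
    then have "1 - \<alpha> \<le> 0" by (simp add: mult_le_0_iff)
    moreover have "measure P T / measure P A\<omega> \<ge> 0" by simp
    ultimately show ?thesis unfolding T_def A\<omega>_def by linarith
  next
    case 3
    define S where "S i w = s (Z i w)" for i w
    define PB where "PB = PiM {..<N} (\<lambda>_. borel :: real measure)"
    define W where "W w = (\<lambda>i\<in>{..<N}. S i w)" for w
    define D where "D = {x \<in> space (borel \<Otimes>\<^sub>M PB).
        (\<Sum>i\<in>{..<N}. if snd x i < fst x then 1 else 0 :: real) < real k}"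
    define C where "C = {w \<in> space P. (S N w, W w) \<in> D}"
    have S_meas: "S i \<in> borel_measurable P" if "i \<le> N" for i
      unfolding S_def using measurable_comp[OF Zrv[OF that] s_meas] by (simp add: comp_def)
    have W_meas: "W \<in> measurable P PB"
      unfolding W_def PB_def by (rule measurable_restrict) (auto intro: S_meas)
    have W_sp: "W w \<in> space PB" for w
      unfolding W_def PB_def by (simp add: space_PiM)
    have sum_card: "(\<Sum>i\<in>{..<N}. if W w i < S N w then 1 else 0 :: real) = real (card {i. i < N \<and> s (Z i w) < s (Z N w)})" for w
    proof -
      have "(\<Sum>i\<in>{..<N}. if W w i < S N w then 1 else 0 :: real) = (\<Sum>i\<in>{..<N}. if S i w < S N w then 1 else 0 :: real)"
        unfolding W_def by (intro sum.cong) auto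
      also have "\<dots> = real (card {i\<in>{..<N}. S i w < S N w})" by (rule sum_ind_card) simp
      finally show ?thesis unfolding S_def by simp
    qed
    have TC: "T = C \<inter> A\<omega>"
    proof -
      have "s (Z N w) \<le> sort (map (\<lambda>i. s (Z i w)) [0..<N]) ! (k - 1) \<longleftrightarrow>
          card {i. i < N \<and> s (Z i w) < s (Z N w)} < k" for w
      proof -
        have "{i. i < N \<and> map (\<lambda>i. s (Z i w)) [0..<N] ! i < s (Z N w)} = {i. i < N \<and> s (Z i w) < s (Z N w)}"
          by auto
        then show ?thesis
          using sort_thresh[of k "map (\<lambda>i. s (Z i w)) [0..<N]" "s (Z N w)"] 3 by simp
      qed
      then show ?thesis
        unfolding T_def C_def A\<omega>_def conformal_set_def qhat D_def using 3 ZN_sp W_sp sum_card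
        by (auto simp: mem_Times_iff space_pair_measure S_def)
    qed
    have indC: "measure P (C \<inter> A\<omega>) = measure P A\<omega> * measure P C"
    proof -
      have ir: "p.indep_var (PiM {N} (\<lambda>_. ?M)) (\<lambda>\<omega>. restrict (\<lambda>i. Z i \<omega>) {N})
                 (PiM {..<N} (\<lambda>_. ?M)) (\<lambda>\<omega>. restrict (\<lambda>i. Z i \<omega>) {..<N})"
        by (rule p.indep_var_restrict[OF iid_indep]) auto
      have m1: "(\<lambda>f. f N) \<in> measurable (PiM {N} (\<lambda>_. ?M)) ?M"
        by (rule measurable_component_singleton) simp
      have m2: "(\<lambda>f. \<lambda>i\<in>{..<N}. s (f i)) \<in> measurable (PiM {..<N} (\<lambda>_. ?M)) PB"
        unfolding PB_def
        by (intro measurable_restrict measurable_compose[OF _ s_meas] measurable_component_singleton) simp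
      have ZN'sp: "(\<lambda>i\<in>{N}. Z i x) \<in> space (PiM {N} (\<lambda>_. ?M))" if "x \<in> space P" for x
        using measurable_space[OF Zrv[of N] that] by (simp add: space_PiM)
      have W'sp: "(\<lambda>i\<in>{..<N}. Z i x) \<in> space (PiM {..<N} (\<lambda>_. ?M))" if "x \<in> space P" for x
        using measurable_space[OF Zrv that] by (simp add: space_PiM)
      have keyZW: "measure P (Z N -` E \<inter> space P \<inter> (W -` F \<inter> space P)) =
          measure P (Z N -` E \<inter> space P) * measure P (W -` F \<inter> space P)"
        if E: "E \<in> sets ?M" and F: "F \<in> sets PB" for E F
      proof -
        let ?f2 = "\<lambda>f. \<lambda>i\<in>{..<N}. s (f i)"
        define E' where "E' = (\<lambda>f. f N) -` E \<inter> space (PiM {N} (\<lambda>_. ?M))"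
        define F' where "F' = ?f2 -` F \<inter> space (PiM {..<N} (\<lambda>_. ?M))"
        have E': "E' \<in> sets (PiM {N} (\<lambda>_. ?M))" unfolding E'_def by (rule measurable_sets[OF m1 E])
        have F': "F' \<in> sets (PiM {..<N} (\<lambda>_. ?M))" unfolding F'_def by (rule measurable_sets[OF m2 F])
        have Wx: "W x = ?f2 (\<lambda>i\<in>{..<N}. Z i x)" for x
          by (simp add: W_def S_def fun_eq_iff)
        have "Z N -` E \<inter> space P \<inter> (W -` F \<inter> space P) =
            (\<lambda>x. ((\<lambda>i\<in>{N}. Z i x), (\<lambda>i\<in>{..<N}. Z i x))) -` (E' \<times> F') \<inter> space P"
          unfolding E'_def F'_def using ZN'sp W'sp Wx by auto
        also have "measure P \<dots> = measure P ((\<lambda>x. (\<lambda>i\<in>{N}. Z i x)) -` E' \<inter> space P) *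
            measure P ((\<lambda>x. (\<lambda>i\<in>{..<N}. Z i x)) -` F' \<inter> space P)"
          by (rule p.indep_varD[OF ir E' F'])
        also have "(\<lambda>x. (\<lambda>i\<in>{N}. Z i x)) -` E' \<inter> space P = Z N -` E \<inter> space P"
          unfolding E'_def using ZN'sp by auto
        also have "(\<lambda>x. (\<lambda>i\<in>{..<N}. Z i x)) -` F' \<inter> space P = W -` F \<inter> space P"
          unfolding F'_def using W'sp Wx by auto
        finally show ?thesis .
      qed
      define XS where "XS = {(\<lambda>w. fst (Z N w)) -` A \<inter> space P | A. A \<in> sets MX}"
      define G where "G = {((\<lambda>w. s (Z N w)) -` B \<inter> space P) \<inter> (W -` F \<inter> space P) | B F.
                              B \<in> sets (borel :: real measure) \<and> F \<in> sets PB}"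
      have X_meas: "(\<lambda>w. fst (Z N w)) \<in> measurable P MX"
        using measurable_compose[OF Zrv[of N] measurable_fst] by simp
      have SN_meas: "(\<lambda>w. s (Z N w)) \<in> borel_measurable P"
        using S_meas[of N] unfolding S_def by simp
      have XS_ev: "XS \<subseteq> p.events" unfolding XS_def using X_meas by auto
      have G_ev: "G \<subseteq> p.events" unfolding G_def using SN_meas W_meas by auto
      have indG: "p.indep_set XS G"
      proof (rule p.indep_setI[OF XS_ev G_ev])
        fix a b assume a: "a \<in> XS" and b: "b \<in> G"
        obtain A where A: "A \<in> sets MX" "a = (\<lambda>w. fst (Z N w)) -` A \<inter> space P"
          using a unfolding XS_def by auto
        obtain B F where BF: "B \<in> sets (borel :: real measure)" "F \<in> sets PB"
            "b = ((\<lambda>w. s (Z N w)) -` B \<inter> space P) \<inter> (W -` F \<inter> space P)"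
          using b unfolding G_def by auto
        define E where "E = {z \<in> space ?M. fst z \<in> A \<and> s z \<in> B}"
        define E2 where "E2 = {z \<in> space ?M. s z \<in> B}"
        have E: "E \<in> sets ?M" unfolding E_def using A BF s_meas by measurable
        have E2: "E2 \<in> sets ?M" unfolding E2_def using BF s_meas by measurable
        have "a \<inter> b = Z N -` E \<inter> space P \<inter> (W -` F \<inter> space P)"
          using ZN_sp unfolding A BF E_def by (auto simp: space_pair_measure)
        then have "measure P (a \<inter> b) = measure P (Z N -` E \<inter> space P) * measure P (W -` F \<inter> space P)"
          using keyZW[OF E BF(2)] by simp
        also have "Z N -` E \<inter> space P = a \<inter> ((\<lambda>w. s (Z N w)) -` B \<inter> space P)"
          using ZN_sp unfolding A E_def by (auto simp: space_pair_measure)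
        also have "measure P \<dots> = measure P a * measure P ((\<lambda>w. s (Z N w)) -` B \<inter> space P)"
          by (rule p.indep_setD[OF indep_X_score]) (use A BF in auto)
        finally have 1: "measure P (a \<inter> b) = measure P a * (measure P ((\<lambda>w. s (Z N w)) -` B \<inter> space P)
             * measure P (W -` F \<inter> space P))" by simp
        have "b = Z N -` E2 \<inter> space P \<inter> (W -` F \<inter> space P)"
          using ZN_sp unfolding BF E2_def by (auto simp: space_pair_measure)
        then have "measure P b = measure P (Z N -` E2 \<inter> space P) * measure P (W -` F \<inter> space P)"
          using keyZW[OF E2 BF(2)] by simp
        also have "Z N -` E2 \<inter> space P = (\<lambda>w. s (Z N w)) -` B \<inter> space P"
          using ZN_sp unfolding E2_def by (auto simp: space_pair_measure)
        finally have 2: "measure P b = measure P ((\<lambda>w. s (Z N w)) -` B \<inter> space P) * measure P (W -` F \<inter> space P)" .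
        show "measure P (a \<inter> b) = measure P a * measure P b" using 1 2 by simp
      qed
      have stX: "Int_stable XS"
      proof (rule Int_stableI)
        fix a b assume "a \<in> XS" "b \<in> XS"
        then obtain A A' where "A \<in> sets MX" "A' \<in> sets MX"
          "a = (\<lambda>w. fst (Z N w)) -` A \<inter> space P" "b = (\<lambda>w. fst (Z N w)) -` A' \<inter> space P"
          unfolding XS_def by auto
        then show "a \<inter> b \<in> XS" unfolding XS_def by (intro CollectI exI[of _ "A \<inter> A'"]) auto
      qed
      have stG: "Int_stable G"
      proof (rule Int_stableI)
        fix a b assume "a \<in> G" "b \<in> G"
        then obtain B F B' F' where "B \<in> sets (borel :: real measure)" "F \<in> sets PB"
            "a = ((\<lambda>w. s (Z N w)) -` B \<inter> space P) \<inter> (W -` F \<inter> space P)"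
            "B' \<in> sets (borel :: real measure)" "F' \<in> sets PB"
            "b = ((\<lambda>w. s (Z N w)) -` B' \<inter> space P) \<inter> (W -` F' \<inter> space P)"
          unfolding G_def by blast
        then show "a \<inter> b \<in> G" unfolding G_def
          by (intro CollectI exI[of _ "B \<inter> B'"] exI[of _ "F \<inter> F'"]) auto
      qed
      have indS: "p.indep_set (sigma_sets (space P) XS) (sigma_sets (space P) G)"
        by (rule p.indep_set_sigma_sets[OF indG stX stG])
      have Aw: "A\<omega> \<in> sigma_sets (space P) XS"
      proof (rule sigma_sets.Basic)
        show "A\<omega> \<in> XS" unfolding XS_def A\<omega>_def using omega by auto
      qed
      have Cs: "C \<in> sigma_sets (space P) G"
      proof -
        let ?Y = "\<lambda>w. (S N w, W w)"
        have Ysp: "?Y \<in> space P \<rightarrow> space (borel :: real measure) \<times> space PB" using W_sp by auto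
        have Dm: "D \<in> sets (borel \<Otimes>\<^sub>M PB)"
        proof -
          have sm: "(\<lambda>x. if snd x i < fst x then 1 else 0 :: real) \<in> borel_measurable (borel \<Otimes>\<^sub>M PB)"
            if "i \<in> {..<N}" for i
          proof -
            have [measurable]: "(\<lambda>x. snd x i) \<in> borel_measurable (borel \<Otimes>\<^sub>M PB)"
              unfolding PB_def using that
              by (intro measurable_compose[OF measurable_snd measurable_component_singleton]) auto
            show ?thesis by measurable
          qed
          have [measurable]: "(\<lambda>x. \<Sum>i\<in>{..<N}. if snd x i < fst x then 1 else 0 :: real) \<in> borel_measurable (borel \<Otimes>\<^sub>M PB)"
            by (rule borel_measurable_sum) (rule sm)
          then show ?thesis unfolding D_def by measurable
        qed
        have "C = ?Y -` D \<inter> space P" unfolding C_def by auto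
        also have "\<dots> \<in> {?Y -` A \<inter> space P | A. A \<in> sigma_sets (space borel \<times> space PB)
               {a \<times> b | a b. a \<in> sets borel \<and> b \<in> sets PB}}"
          using Dm unfolding sets_pair_measure by auto
        also have "\<dots> = sigma_sets (space P) {?Y -` A \<inter> space P | A. A \<in>
               {a \<times> b | a b. a \<in> sets borel \<and> b \<in> sets PB}}"
          by (rule sigma_sets_vimage_commute[OF Ysp])
        also have "\<dots> \<subseteq> sigma_sets (space P) G"
        proof (rule sigma_sets_mono')
          show "{?Y -` A \<inter> space P | A. A \<in> {a \<times> b | a b. a \<in> sets borel \<and> b \<in> sets PB}} \<subseteq> G"
            unfolding G_def S_def by auto
        qed
        finally show ?thesis .
      qed
      have "measure P (A\<omega> \<inter> C) = measure P A\<omega> * measure P C"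
        by (rule p.indep_setD[OF indS Aw Cs])
      then show ?thesis by (simp add: Int_commute)
    qed
    have probC: "real (N + 1) * measure P C \<ge> real k"
    proof -
      define QB where "QB = PiM {..N} (\<lambda>_. borel :: real measure)"
      define V where "V w = (\<lambda>i\<in>{..N}. S i w)" for w
      define \<mu> where "\<mu> = distr P (borel :: real measure) (S N)"
      define Q where "Q = PiM {..N} (\<lambda>_. \<mu>)"
      have Seq: "S = (\<lambda>i x. s (Z i x))" by (simp add: fun_eq_iff S_def)
      have indS: "p.indep_vars (\<lambda>_. borel) S {..N}"
        unfolding Seq by (rule p.indep_vars_compose2[OF iid_indep s_meas])
      have law0: "distr P borel (S i) = distr \<pi> borel s" if "i \<le> N" for i
      proof -
        have "distr P borel (S i) = distr (distr P ?M (Z i)) borel s"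
          by (subst distr_distr[OF s_meas Zrv[OF that]]) (simp add: comp_def Seq)
        also have "\<dots> = distr \<pi> borel s" using iid_law that by simp
        finally show ?thesis .
      qed
      have lawS: "distr P borel (S i) = \<mu>" if "i \<le> N" for i
        unfolding \<mu>_def using law0[OF that] law0[of N] by simp
      have V_meas: "V \<in> measurable P QB"
        unfolding V_def QB_def by (rule measurable_restrict) (auto intro: S_meas)
      have "distr P QB V = (\<Pi>\<^sub>M i\<in>{..N}. distr P borel (S i))"
        using p.indep_vars_iff_distr_eq_PiM'[where I="{..N}" and M'="\<lambda>_. borel" and X=S] indS S_meas
        unfolding QB_def V_def by auto
      also have "\<dots> = Q" unfolding Q_def by (rule PiM_cong) (auto simp: lawS)
      finally have lawV: "distr P QB V = Q" .
      have muP: "prob_space \<mu>" unfolding \<mu>_def by (rule p.prob_space_distr[OF S_meas]) simp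
      interpret Q: prob_space Q unfolding Q_def by (intro prob_space_PiM muP)
      have sQ: "sets Q = sets QB" unfolding Q_def QB_def \<mu>_def by (rule sets_PiM_cong) auto
      have spQ: "space Q = space QB" using sets_eq_imp_space_eq[OF sQ] .
      define cnt where "cnt j (v :: nat \<Rightarrow> real) = (\<Sum>i\<in>{..N}. if v i < v j then 1 else 0 :: real)" for j v
      define E where "E j = {v \<in> space Q. cnt j v < real k}" for j
      have cnt_meas: "cnt j \<in> borel_measurable QB" if "j \<le> N" for j
      proof -
        have [measurable]: "(\<lambda>v. v j) \<in> borel_measurable QB"
          unfolding QB_def using that by (intro measurable_component_singleton) auto
        have sm: "(\<lambda>v. if v i < v j then 1 else 0 :: real) \<in> borel_measurable QB" if "i \<in> {..N}" for i
        proof -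
          have [measurable]: "(\<lambda>v. v i) \<in> borel_measurable QB"
            unfolding QB_def using that by (intro measurable_component_singleton) auto
          show ?thesis by measurable
        qed
        show ?thesis unfolding cnt_def by (rule borel_measurable_sum) (rule sm)
      qed
      have E_sets: "E j \<in> sets Q" if "j \<le> N" for j
      proof -
        have [measurable]: "cnt j \<in> borel_measurable QB" by (rule cnt_meas[OF that])
        have "{v \<in> space QB. cnt j v < real k} \<in> sets QB" by measurable
        then show ?thesis unfolding E_def sQ spQ .
      qed
      have EjN: "measure Q (E j) = measure Q (E N)" if j: "j \<le> N" for j
      proof -
        define t where "t n = (if n = j then N else if n = N then j else n)" for n
        define g where "g \<omega> = (\<lambda>n\<in>{..N}. \<omega> (t n))" for \<omega> :: "nat \<Rightarrow> real"
        have tt: "t (t n) = n" for n unfolding t_def by auto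
        have tN: "t n \<in> {..N}" if "n \<in> {..N}" for n using that j unfolding t_def by auto
        have tb: "bij_betw t {..N} {..N}"
        proof (rule bij_betw_imageI)
          show "inj_on t {..N}" by (metis inj_onI tt)
          show "t ` {..N} = {..N}"
          proof
            show "t ` {..N} \<subseteq> {..N}" using tN by auto
            show "{..N} \<subseteq> t ` {..N}"
            proof
              fix x assume "x \<in> {..N}"
              then show "x \<in> t ` {..N}" using tN[of x] tt[of x] by (metis image_eqI)
            qed
          qed
        qed
        have gQ: "distr Q Q g = Q"
          unfolding Q_def g_def
          using distr_PiM_reindex[of "{..N}" "\<lambda>_. \<mu>" t "{..N}"] muP tN
            bij_betw_imp_inj_on[OF tb] by auto
        have gm: "g \<in> measurable Q Q"
          unfolding Q_def g_def
          by (intro measurable_restrict measurable_component_singleton) (use tN in auto)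
        have "measure Q (E N) = measure (distr Q Q g) (E N)" using gQ by simp
        also have "\<dots> = measure Q (g -` E N \<inter> space Q)"
          by (rule measure_distr[OF gm E_sets]) simp
        also have "g -` E N \<inter> space Q = E j"
        proof -
          have "cnt N (g v) = cnt j v" for v
          proof -
            have "cnt N (g v) = (\<Sum>i\<in>{..N}. (\<lambda>i. if v i < v j then 1 else 0 :: real) (t i))"
              unfolding cnt_def g_def using tN by (intro sum.cong) (auto simp: t_def)
            also have "\<dots> = cnt j v" unfolding cnt_def by (rule sum.reindex_bij_betw[OF tb])
            finally show ?thesis .
          qed
          then show ?thesis unfolding E_def using measurable_space[OF gm] by auto
        qed
        finally show ?thesis by simp
      qed
      have sumE: "(\<Sum>j\<in>{..N}. measure Q (E j)) \<ge> real k"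
      proof -
        have intE: "integrable Q (indicator (E j) :: _ \<Rightarrow> real)" if "j \<in> {..N}" for j
          using E_sets that by (intro integrable_real_indicator) (auto simp: less_top[symmetric])
        have "(\<Sum>j\<in>{..N}. measure Q (E j)) = integral\<^sup>L Q (\<lambda>v. \<Sum>j\<in>{..N}. indicator (E j) v :: real)"
        proof -
          have "integral\<^sup>L Q (\<lambda>v. \<Sum>j\<in>{..N}. indicator (E j) v :: real) = (\<Sum>j\<in>{..N}. integral\<^sup>L Q (indicator (E j) :: _ \<Rightarrow> real))"
            by (rule Bochner_Integration.integral_sum) (rule intE)
          also have "\<dots> = (\<Sum>j\<in>{..N}. measure Q (E j))"
            by (intro sum.cong refl) (auto simp: E_def intro!: arg_cong[where f="measure Q"])
          finally show ?thesis by simp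
        qed
        also have "\<dots> \<ge> real k"
        proof (rule Q.integral_ge_const)
          show "integrable Q (\<lambda>v. \<Sum>j\<in>{..N}. indicator (E j) v :: real)"
            using intE by (intro Bochner_Integration.integrable_sum) auto
          show "AE v in Q. real k \<le> (\<Sum>j\<in>{..N}. indicator (E j) v)"
          proof (rule AE_I2)
            fix v assume v: "v \<in> space Q"
            have "(\<Sum>j\<in>{..N}. indicator (E j) v :: real) = (\<Sum>j\<in>{..N}. if card {i\<in>{..N}. v i < v j} < k then 1 else 0)"
              using v by (intro sum.cong) (auto simp: E_def cnt_def sum_ind_card indicator_def)
            also have "\<dots> = real (card {j\<in>{..N}. card {i\<in>{..N}. v i < v j} < k})"
              by (rule sum_ind_card) simp
            also have "real k \<le> \<dots>"
              using count_ge[of "{..N}" k v] 3 by simp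
            finally show "real k \<le> (\<Sum>j\<in>{..N}. indicator (E j) v)" .
          qed
        qed
        finally show ?thesis .
      qed
      have ENC: "measure Q (E N) = measure P C"
      proof -
        have "measure Q (E N) = measure (distr P QB V) (E N)" using lawV by simp
        also have "\<dots> = measure P (V -` E N \<inter> space P)"
          by (rule measure_distr[OF V_meas]) (use E_sets sQ in auto)
        also have "V -` E N \<inter> space P = C"
        proof -
          have "cnt N (V w) = (\<Sum>i\<in>{..<N}. if W w i < S N w then 1 else 0 :: real)" for w
          proof -
            have "cnt N (V w) = (\<Sum>i\<in>{..<Suc N}. if S i w < S N w then 1 else 0 :: real)"
              unfolding cnt_def V_def lessThan_Suc_atMost by (intro sum.cong) auto
            also have "\<dots> = (\<Sum>i\<in>{..<N}. if W w i < S N w then 1 else 0 :: real)"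
              unfolding W_def by (simp add: sum.lessThan_Suc)
            finally show ?thesis .
          qed
          then show ?thesis
            unfolding C_def E_def D_def using measurable_space[OF V_meas] W_sp spQ
            by (auto simp: space_pair_measure)
        qed
        finally show ?thesis .
      qed
      have "(\<Sum>j\<in>{..N}. measure Q (E j)) = real (N + 1) * measure P C"
        using EjN ENC by simp
      then show ?thesis using sumE by simp
    qed
    have "measure P C \<ge> 1 - \<alpha>"
    proof -
      have h1: "(1 - \<alpha>) * real (N + 1) \<le> real k" unfolding k_def by linarith
      have h2: "real k \<le> measure P C * real (N + 1)" using probC by (simp add: mult.commute)
      have "(1 - \<alpha>) * real (N + 1) \<le> measure P C * real (N + 1)" using h1 h2 by linarith
      then show ?thesis by (rule mult_right_le_imp_le) simp
    qed
    then show ?thesis using posA indC TC unfolding T_def[symmetric] A\<omega>_def[symmetric]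
      by (simp add: Int_commute)
  qed
qed

end
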